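(* Let $m\ge 2$, $d_1,\dots,d_m\ge 2$, and let $\rho$ be a density matrix on $\mathbb{C}^{d_1}\otimes\cdots\otimes\mathbb{C}^{d_m}$. For each $i=1,\dots,m$ let $\mathcal{P}^{(i)}=\{P^{(i)}_j\}_{j=1}^{d_i^2}$ be a general SIC-POVM on $\mathbb{C}^{d_i}$ with parameter $a_i$. Let $d=\min\{d_1^2,\dots,d_m^2\}$ and define $$J(\rho)=\max_{\sigma_1,\dots,\sigma_m}\sum_{j=1}^{d}\mathrm{Tr}\Big[\Big(\bigotimes_{i=1}^m P^{(i)}_{\sigma_i(j)}\Big)\rho\Big],$$ where the maximum runs over all tuples of injective maps $\sigma_i:\{1,\dots,d\}\to\{1,\dots,d_i^2\}$, $i=1,\dots,m$. If $\rho$ is fully separable, then $$J(\rho)\le \frac1m\sum_{i=1}^m\frac{a_id_i^2+1}{d_i(d_i+1)}.$$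
   Context: A general SIC-POVM on $\mathbb{C}^{n}$ with parameter $a$ is a set of $n^2$ positive semidefinite operators $\{P_\alpha\}_{\alpha=1}^{n^2}$ on $\mathbb{C}^{n}$ such that $\sum_{\alpha=1}^{n^2}P_\alpha=I$, $\mathrm{Tr}(P_\alpha^2)=a$ for all $\alpha$, and $\mathrm{Tr}(P_\alpha P_\beta)=\frac{1-na}{n(n^2-1)}$ for all $\alpha\neq\beta$; here $\frac{1}{n^3}<a\le\frac{1}{n^2}$. A density matrix on $\mathbb{C}^{d_1}\otimes\cdots\otimes\mathbb{C}^{d_m}$ is fully separable if it is a convex combination of product states $\rho_1\otimes\cdots\otimes\rho_m$. *)

theory Defs
  imports Complex_Main "Jordan_Normal_Form.Matrix"
begin

(* Matrices are Jordan_Normal_Form matrices over complex numbers; all indices are 0-based. *)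

definition mtrace :: "complex mat \<Rightarrow> complex" where
  "mtrace A = (\<Sum>i<dim_row A. A $$ (i, i))"

definition hermitian_mat :: "nat \<Rightarrow> complex mat \<Rightarrow> bool" where
  "hermitian_mat n A \<longleftrightarrow> A \<in> carrier_mat n n \<and>
     (\<forall>i<n. \<forall>j<n. A $$ (i, j) = cnj (A $$ (j, i)))"

definition psd_mat :: "nat \<Rightarrow> complex mat \<Rightarrow> bool" where
  "psd_mat n A \<longleftrightarrow> hermitian_mat n A \<and>
     (\<forall>v :: nat \<Rightarrow> complex. 0 \<le> Re (\<Sum>i<n. \<Sum>j<n. cnj (v i) * A $$ (i, j) * v j))"

definition density_matrix :: "nat \<Rightarrow> complex mat \<Rightarrow> bool" where
  "density_matrix n \<rho> \<longleftrightarrow> psd_mat n \<rho> \<and> mtrace \<rho> = 1"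

definition kron :: "complex mat \<Rightarrow> complex mat \<Rightarrow> complex mat" where
  "kron A B = mat (dim_row A * dim_row B) (dim_col A * dim_col B)
     (\<lambda>(i, j). A $$ (i div dim_row B, j div dim_col B) * B $$ (i mod dim_row B, j mod dim_col B))"

fun tensor_prod :: "nat \<Rightarrow> (nat \<Rightarrow> complex mat) \<Rightarrow> complex mat" where
  "tensor_prod 0 A = 1\<^sub>m 1"
| "tensor_prod (Suc k) A = kron (tensor_prod k A) (A k)"

definition general_sic_povm :: "nat \<Rightarrow> real \<Rightarrow> (nat \<Rightarrow> complex mat) \<Rightarrow> bool" where
  "general_sic_povm n a P \<longleftrightarrow>
     1 / real n ^ 3 < a \<and> a \<le> 1 / real n ^ 2 \<and>
     (\<forall>\<alpha><n^2. psd_mat n (P \<alpha>)) \<and>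
     (\<forall>i<n. \<forall>j<n. (\<Sum>\<alpha><n^2. P \<alpha> $$ (i, j)) = (1\<^sub>m n :: complex mat) $$ (i, j)) \<and>
     (\<forall>\<alpha><n^2. mtrace (P \<alpha> * P \<alpha>) = complex_of_real a) \<and>
     (\<forall>\<alpha><n^2. \<forall>\<beta><n^2. \<alpha> \<noteq> \<beta> \<longrightarrow>
        mtrace (P \<alpha> * P \<beta>) = complex_of_real ((1 - real n * a) / (real n * (real n ^ 2 - 1))))"

definition fully_separable :: "nat \<Rightarrow> (nat \<Rightarrow> nat) \<Rightarrow> complex mat \<Rightarrow> bool" where
  "fully_separable m d \<rho> \<longleftrightarrow>
     (let D = (\<Prod>i<m. d i) in
      \<exists>(K::nat) (p :: nat \<Rightarrow> real) (\<sigma> :: nat \<Rightarrow> nat \<Rightarrow> complex mat).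
        (\<forall>k<K. 0 \<le> p k) \<and> (\<Sum>k<K. p k) = 1 \<and>
        (\<forall>k<K. \<forall>i<m. density_matrix (d i) (\<sigma> k i)) \<and>
        \<rho> = mat D D (\<lambda>(r, c). \<Sum>k<K. complex_of_real (p k) * tensor_prod m (\<sigma> k) $$ (r, c)))"

(* J(rho): maximum over tuples of injective maps sigma_i : {0..<dd} \<rightarrow> {0..<d_i^2},
   dd = min_i d_i^2, of  sum_j Tr[(\<otimes>_i P_i(sigma_i j)) rho]  (a real number, taken as Re) *)
definition J_value :: "nat \<Rightarrow> (nat \<Rightarrow> nat) \<Rightarrow> (nat \<Rightarrow> nat \<Rightarrow> complex mat) \<Rightarrow> complex mat \<Rightarrow> real" where
  "J_value m d P \<rho> =
     (let dd = Min ((\<lambda>i. d i ^ 2) ` {..<m}) in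
      Max {Re (\<Sum>j<dd. mtrace (tensor_prod m (\<lambda>i. P i (\<sigma> i j)) * \<rho>)) | \<sigma> :: nat \<Rightarrow> nat \<Rightarrow> nat.
             \<forall>i<m. inj_on (\<sigma> i) {..<dd} \<and> \<sigma> i ` {..<dd} \<subseteq> {..<d i ^ 2}})"

end

theory Submission
  imports Defs
begin


definition ipr :: "nat \<Rightarrow> (nat \<Rightarrow> nat \<Rightarrow> complex) \<Rightarrow> (nat \<Rightarrow> nat \<Rightarrow> complex) \<Rightarrow> real" where
  "ipr n A B = (\<Sum>i<n. \<Sum>j<n. Re (A i j * cnj (B i j)))"

lemma ipr_sym: "ipr n A B = ipr n B A"
  unfolding ipr_def by (simp add: mult.commute)

lemma ipr_nonneg: "0 \<le> ipr n A A"
  unfolding ipr_def by (intro sum_nonneg) (simp add: complex_mult_cnj)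

lemma ipr_sum_left:
  assumes "finite S"
  shows "ipr n (\<lambda>i j. \<Sum>\<alpha>\<in>S. complex_of_real (u \<alpha>) * M \<alpha> i j) B = (\<Sum>\<alpha>\<in>S. u \<alpha> * ipr n (M \<alpha>) B)"
proof -
  have "ipr n (\<lambda>i j. \<Sum>\<alpha>\<in>S. complex_of_real (u \<alpha>) * M \<alpha> i j) B
      = (\<Sum>i<n. \<Sum>j<n. \<Sum>\<alpha>\<in>S. u \<alpha> * Re (M \<alpha> i j * cnj (B i j)))"
    unfolding ipr_def by (simp add: sum_distrib_right Re_sum mult.assoc)
  also have "\<dots> = (\<Sum>\<alpha>\<in>S. \<Sum>i<n. \<Sum>j<n. u \<alpha> * Re (M \<alpha> i j * cnj (B i j)))"
    by (simp add: sum.swap[of _ S] )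
  also have "\<dots> = (\<Sum>\<alpha>\<in>S. u \<alpha> * ipr n (M \<alpha>) B)"
    unfolding ipr_def by (simp add: sum_distrib_left)
  finally show ?thesis .
qed

lemma ipr_sum_right:
  assumes "finite S"
  shows "ipr n B (\<lambda>i j. \<Sum>\<alpha>\<in>S. complex_of_real (u \<alpha>) * M \<alpha> i j) = (\<Sum>\<alpha>\<in>S. u \<alpha> * ipr n B (M \<alpha>))"
  using ipr_sum_left[OF assms] by (simp add: ipr_sym)

lemma ipr_lin3:
  "ipr n (\<lambda>i j. A i j + complex_of_real u * B i j + complex_of_real v * C i j) D
   = ipr n A D + u * ipr n B D + v * ipr n C D"
  unfolding ipr_def by (simp add: algebra_simps sum.distrib sum_distrib_left)

lemma ipr_lin3_right:
  "ipr n D (\<lambda>i j. A i j + complex_of_real u * B i j + complex_of_real v * C i j)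
   = ipr n D A + u * ipr n D B + v * ipr n D C"
  using ipr_lin3 by (simp add: ipr_sym)

lemma if01_mult: "(if P then 1 else 0) * (x::complex) = (if P then x else 0)"
  "x * (if P then 1 else 0) = (if P then x else 0)" by simp_all

lemma mtrace_mult:
  assumes "A \<in> carrier_mat n n" "B \<in> carrier_mat n n"
  shows "mtrace (A * B) = (\<Sum>i<n. \<Sum>j<n. A $$ (i, j) * B $$ (j, i))"
  using assms unfolding mtrace_def
  by (auto simp: scalar_prod_def atLeast0LessThan intro!: sum.cong)

lemma herm_mtrace:
  assumes "hermitian_mat n A" "hermitian_mat n B"
  shows "mtrace (A * B) = complex_of_real (ipr n (\<lambda>i j. A $$ (i, j)) (\<lambda>i j. B $$ (i, j)))"
proof -
  define s where "s = (\<Sum>i<n. \<Sum>j<n. A $$ (i, j) * cnj (B $$ (i, j)))"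
  have AB: "A \<in> carrier_mat n n" "B \<in> carrier_mat n n"
    "\<forall>i<n. \<forall>j<n. A $$ (i, j) = cnj (A $$ (j, i))" "\<forall>i<n. \<forall>j<n. B $$ (i, j) = cnj (B $$ (j, i))"
    using assms unfolding hermitian_mat_def by blast+
  have 1: "mtrace (A * B) = s"
    unfolding mtrace_mult[OF AB(1,2)] s_def
  proof (intro sum.cong refl)
    fix i j assume "i \<in> {..<n}" "j \<in> {..<n}"
    then have "B $$ (j, i) = cnj (B $$ (i, j))" using AB(4) by blast
    then show "A $$ (i, j) * B $$ (j, i) = A $$ (i, j) * cnj (B $$ (i, j))" by simp
  qed
  have "cnj s = (\<Sum>i<n. \<Sum>j<n. A $$ (j, i) * cnj (B $$ (j, i)))"
    unfolding s_def cnj_sum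
  proof (intro sum.cong refl)
    fix i j assume "i \<in> {..<n}" "j \<in> {..<n}"
    then have "B $$ (j, i) = cnj (B $$ (i, j))" "A $$ (j, i) = cnj (A $$ (i, j))" using AB(3,4) by blast+
    then show "cnj (A $$ (i, j) * cnj (B $$ (i, j))) = A $$ (j, i) * cnj (B $$ (j, i))" by simp
  qed
  also have "\<dots> = s" unfolding s_def by (rule sum.swap)
  finally have "cnj s = s" .
  then have "Im (cnj s) = Im s" by (rule arg_cong)
  then have "Im s = 0" by simp
  then have "s = complex_of_real (Re s)" by (simp add: complex_eq_iff)
  moreover have "Re s = ipr n (\<lambda>i j. A $$ (i, j)) (\<lambda>i j. B $$ (i, j))"
    unfolding s_def ipr_def by (simp add: Re_sum)
  ultimately show ?thesis using 1 by simp
qed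

lemma psd_two:
  assumes "psd_mat n A" "i < n" "j < n" "i \<noteq> j"
  shows "0 \<le> Re (cnj s * A $$ (i, i) * s + cnj s * A $$ (i, j) * t + cnj t * A $$ (j, i) * s + cnj t * A $$ (j, j) * t)"
proof -
  define v where "v = (\<lambda>k. if k = i then s else if k = j then t else 0)"
  have 0: "0 \<le> Re (\<Sum>k<n. \<Sum>l<n. cnj (v k) * A $$ (k, l) * v l)"
    using assms(1) unfolding psd_mat_def by blast
  have sub: "{i, j} \<subseteq> {..<n}" using assms by auto
  have "(\<Sum>k<n. \<Sum>l<n. cnj (v k) * A $$ (k, l) * v l) = (\<Sum>k\<in>{i,j}. \<Sum>l\<in>{i,j}. cnj (v k) * A $$ (k, l) * v l)"
  proof -
    have i1: "(\<Sum>l<n. cnj (v k) * A $$ (k, l) * v l) = (\<Sum>l\<in>{i,j}. cnj (v k) * A $$ (k, l) * v l)" for k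
      by (rule sum.mono_neutral_right) (use sub in \<open>auto simp: v_def\<close>)
    have "(\<Sum>k<n. \<Sum>l<n. cnj (v k) * A $$ (k, l) * v l) = (\<Sum>k<n. \<Sum>l\<in>{i,j}. cnj (v k) * A $$ (k, l) * v l)"
      by (simp add: i1)
    also have "\<dots> = (\<Sum>k\<in>{i,j}. \<Sum>l\<in>{i,j}. cnj (v k) * A $$ (k, l) * v l)"
      by (rule sum.mono_neutral_right) (use sub in \<open>auto simp: v_def\<close>)
    finally show ?thesis .
  qed
  also have "\<dots> = cnj s * A $$ (i, i) * s + cnj s * A $$ (i, j) * t + cnj t * A $$ (j, i) * s + cnj t * A $$ (j, j) * t"
    using assms(4) by (simp add: v_def)
  finally show ?thesis using 0 by simp
qed

lemma quad_nonneg_disc: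
  fixes p q e :: real
  assumes "p \<ge> 0" "q \<ge> 0" "e \<ge> 0" "\<And>r. 0 \<le> p * r^2 - 2 * q * r + q * e"
  shows "q \<le> p * e"
proof (cases "p > 0")
  case True
  have "0 \<le> p * (q/p)^2 - 2 * q * (q/p) + q * e" by (rule assms(4))
  also have "\<dots> = q * (e - q / p)" using True by (simp add: power2_eq_square field_simps)
  finally have "0 \<le> q * (e - q / p)" .
  then have "q = 0 \<or> q / p \<le> e" using assms(2) by (auto simp: zero_le_mult_iff)
  then show ?thesis using True assms by (auto simp: divide_le_eq mult.commute)
next
  case False
  then have "p = 0" using assms(1) by simp
  have "0 \<le> p * (e+1)^2 - 2 * q * (e+1) + q * e" by (rule assms(4))
  then have "0 \<le> - q * (e + 2)" using \<open>p = 0\<close> by (simp add: algebra_simps)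
  moreover have "0 \<le> q * (e + 2)" using assms(2,3) by simp
  ultimately have "q * (e + 2) = 0" by linarith
  then have "q = 0" using assms(3) by simp
  then show ?thesis using \<open>p = 0\<close> by simp
qed

lemma psd_offdiag:
  assumes "psd_mat n A" "i < n" "j < n"
  shows "(cmod (A $$ (i, j)))^2 \<le> Re (A $$ (i, i)) * Re (A $$ (j, j))"
proof -
  have H: "\<forall>i<n. \<forall>j<n. A $$ (i, j) = cnj (A $$ (j, i))"
    using assms(1) unfolding psd_mat_def hermitian_mat_def by blast
  have real: "Im (A $$ (k, k)) = 0" if "k < n" for k
  proof -
    have "A $$ (k, k) = cnj (A $$ (k, k))" using H that by blast
    then have "Im (A $$ (k, k)) = Im (cnj (A $$ (k, k)))" by (rule arg_cong)
    then show ?thesis by simp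
  qed
  have diag: "0 \<le> Re (A $$ (k, k))" if "k < n" for k
  proof -
    define v where "v = (\<lambda>l. if l = k then 1 else 0::complex)"
    have "0 \<le> Re (\<Sum>a<n. \<Sum>b<n. cnj (v a) * A $$ (a, b) * v b)"
      using assms(1) unfolding psd_mat_def by blast
    also have "(\<Sum>a<n. \<Sum>b<n. cnj (v a) * A $$ (a, b) * v b) = A $$ (k, k)"
      using that by (simp add: v_def if01_mult if_distrib[of cnj] cong: if_cong)
    finally show ?thesis .
  qed
  show ?thesis
  proof (cases "i = j")
    case True
    then show ?thesis using real[OF assms(2)] by (simp add: cmod_def power2_eq_square)
  next
    case False
    define c where "c = A $$ (i, j)"
    have Aji: "A $$ (j, i) = cnj c" using H assms(2,3) unfolding c_def by blast
    have q: "cmod c ^ 2 = Re c ^ 2 + Im c ^ 2" by (simp add: cmod_def)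
    have "0 \<le> Re (A $$ (i, i)) * r^2 - 2 * (cmod c)^2 * r + (cmod c)^2 * Re (A $$ (j, j))" for r
    proof -
      have "0 \<le> Re (cnj (complex_of_real r) * A $$ (i, i) * complex_of_real r + cnj (complex_of_real r) * A $$ (i, j) * (- cnj c)
           + cnj (- cnj c) * A $$ (j, i) * complex_of_real r + cnj (- cnj c) * A $$ (j, j) * (- cnj c))"
        by (rule psd_two[OF assms(1-3) False])
      also have "\<dots> = Re (A $$ (i, i)) * r^2 - 2 * (cmod c)^2 * r + (cmod c)^2 * Re (A $$ (j, j))"
        unfolding Aji q using real[OF assms(2)] real[OF assms(3)] unfolding c_def[symmetric]
        by (simp add: algebra_simps power2_eq_square)
      finally show ?thesis .
    qed
    then show ?thesis unfolding c_def
      by (intro quad_nonneg_disc diag assms) auto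
  qed
qed

lemma density_purity:
  assumes "density_matrix n A"
  shows "ipr n (\<lambda>i j. A $$ (i, j)) (\<lambda>i j. A $$ (i, j)) \<le> 1"
proof -
  have psd: "psd_mat n A" and tr: "mtrace A = 1" using assms unfolding density_matrix_def by auto
  have dim: "dim_row A = n" using psd unfolding psd_mat_def hermitian_mat_def carrier_mat_def by blast
  have "ipr n (\<lambda>i j. A $$ (i, j)) (\<lambda>i j. A $$ (i, j)) = (\<Sum>i<n. \<Sum>j<n. (cmod (A $$ (i, j)))^2)"
    unfolding ipr_def by (intro sum.cong refl) (simp add: complex_mult_cnj cmod_power2)
  also have "\<dots> \<le> (\<Sum>i<n. \<Sum>j<n. Re (A $$ (i, i)) * Re (A $$ (j, j)))"
    by (intro sum_mono psd_offdiag[OF psd]) auto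
  also have "\<dots> = (\<Sum>i<n. Re (A $$ (i, i))) * (\<Sum>j<n. Re (A $$ (j, j)))"
    by (rule sum_product[symmetric])
  also have "(\<Sum>i<n. Re (A $$ (i, i))) = 1"
    using tr dim unfolding mtrace_def by (metis Re_sum one_complex.simps(1))
  finally show ?thesis by simp
qed

lemma ipr_cong_left:
  assumes "\<And>i j. i < n \<Longrightarrow> j < n \<Longrightarrow> A i j = A' i j"
  shows "ipr n A B = ipr n A' B"
  unfolding ipr_def using assms by (intro sum.cong refl) auto

lemma sum_if_eq:
  fixes f :: "nat \<Rightarrow> real"
  assumes "\<beta> < N"
  shows "(\<Sum>\<alpha><N. f \<alpha> * (if \<alpha> = \<beta> then a else b)) = b * (\<Sum>\<alpha><N. f \<alpha>) + (a - b) * f \<beta>"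
proof -
  have "(\<Sum>\<alpha><N. f \<alpha> * (if \<alpha> = \<beta> then a else b)) = (\<Sum>\<alpha><N. b * f \<alpha> + (if \<alpha> = \<beta> then (a - b) * f \<alpha> else 0))"
    by (intro sum.cong refl) (auto simp: algebra_simps)
  also have "\<dots> = b * (\<Sum>\<alpha><N. f \<alpha>) + (a - b) * f \<beta>"
    using assms by (simp add: sum.distrib sum_distrib_left)
  finally show ?thesis .
qed

lemma alg: fixes x a :: real assumes "x \<ge> 2"
  shows "(a*x^3 - 1)/(x*(x^2-1)) * (1 - 1/x) + 1/x^2 = (a*x^2+1)/(x*(x+1))"
proof -
  have e: "x*(x^2-1) = x*(x+1)*(x-1)" by (simp add: algebra_simps power2_eq_square)
  have nz: "x - 1 \<noteq> 0" "x*(x+1) \<noteq> 0" "x \<noteq> 0" using assms by auto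
  have s1: "1 - 1/x = (x-1)/x" using nz by (simp add: field_simps)
  have h1: "(a*x^3 - 1)/(x*(x^2-1)) * (1 - 1/x) = (a*x^3 - 1)/(x*(x+1)*x)"
    unfolding e s1 using nz by simp
  have h2: "1/x^2 = (x+1)/(x*(x+1)*x)" using nz by (simp add: power2_eq_square)
  have "(a*x^3 - 1)/(x*(x^2-1)) * (1 - 1/x) + 1/x^2 = (a*x^3 - 1)/(x*(x+1)*x) + (x+1)/(x*(x+1)*x)"
    by (simp only: h1 h2)
  also have "\<dots> = ((a*x^3 - 1) + (x+1))/(x*(x+1)*x)" by (rule add_divide_distrib[symmetric])
  also have "(a*x^3 - 1) + (x+1) = (a*x^2+1) * x" by (simp add: algebra_simps power3_eq_cube power2_eq_square)
  also have "(a*x^2+1) * x / (x*(x+1)*x) = (a*x^2+1)/(x*(x+1))" using nz by simp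
  finally show ?thesis .
qed

lemma sic_bound:
  assumes sic: "general_sic_povm n a P" and n2: "n \<ge> 2" and dm: "density_matrix n \<sigma>"
  shows "(\<Sum>\<alpha><n^2. (Re (mtrace (P \<alpha> * \<sigma>)))^2) \<le> (a * real n ^ 2 + 1) / (real n * (real n + 1))"
proof -
  define N where "N = n^2"
  define b where "b = (1 - real n * a) / (real n * (real n ^ 2 - 1))"
  define c where "c = a - b"
  define E where "E = (\<lambda>A::complex mat. \<lambda>i j. A $$ (i, j))"
  define Id where "Id = (\<lambda>i j::nat. if i = j then 1 else 0 :: complex)"
  have psdP: "\<forall>\<alpha><N. psd_mat n (P \<alpha>)"
    and sumP: "\<forall>i<n. \<forall>j<n. (\<Sum>\<alpha><N. P \<alpha> $$ (i, j)) = (1\<^sub>m n :: complex mat) $$ (i, j)"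
    and trPP: "\<forall>\<alpha><N. mtrace (P \<alpha> * P \<alpha>) = complex_of_real a"
    and trPQ: "\<forall>\<alpha><N. \<forall>\<beta><N. \<alpha> \<noteq> \<beta> \<longrightarrow> mtrace (P \<alpha> * P \<beta>) = complex_of_real b"
    and alow: "1 / real n ^ 3 < a" and ahigh: "a \<le> 1 / real n ^ 2"
    using sic unfolding general_sic_povm_def N_def b_def by blast+
  have hP: "hermitian_mat n (P \<alpha>)" if "\<alpha> < N" for \<alpha>
    using psdP that unfolding psd_mat_def by blast
  have hs: "hermitian_mat n \<sigma>" and trs: "mtrace \<sigma> = 1"
    using dm unfolding density_matrix_def psd_mat_def by blast+
  have dims: "dim_row \<sigma> = n" using hs unfolding hermitian_mat_def carrier_mat_def by blast
  have nr: "real n \<ge> 2" using n2 by simp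
  have nsq: "real n ^ 2 \<ge> 4" using power_mono[OF nr, of 2] by simp
  have den: "real n * (real n ^ 2 - 1) > 0" using nsq nr by simp
  have N_pos: "0 < N" using n2 unfolding N_def by simp
  have realN: "real N = real n ^ 2" unfolding N_def by simp
  have G: "ipr n (E (P \<alpha>)) (E (P \<beta>)) = (if \<alpha> = \<beta> then a else b)" if "\<alpha> < N" "\<beta> < N" for \<alpha> \<beta>
  proof -
    have "complex_of_real (ipr n (E (P \<alpha>)) (E (P \<beta>))) = mtrace (P \<alpha> * P \<beta>)"
      unfolding E_def using herm_mtrace[OF hP[OF that(1)] hP[OF that(2)]] by simp
    also have "\<dots> = complex_of_real (if \<alpha> = \<beta> then a else b)"
      using trPP trPQ that by auto
    finally show ?thesis by (simp only: of_real_eq_iff)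
  qed
  have sumId: "(\<Sum>\<alpha><N. complex_of_real 1 * E (P \<alpha>) i j) = Id i j" if "i < n" "j < n" for i j
    using sumP that unfolding E_def Id_def by simp
  have b_eq: "(real N - 1) * b = (1 - real n * a) / real n"
  proof -
    have "real n ^ 2 - 1 \<noteq> 0" using nsq by linarith
    then show ?thesis unfolding realN b_def using nr by (simp add: field_simps)
  qed
  have trP: "ipr n (E (P \<beta>)) Id = 1 / real n" if "\<beta> < N" for \<beta>
  proof -
    have "ipr n Id (E (P \<beta>)) = ipr n (\<lambda>i j. \<Sum>\<alpha><N. complex_of_real 1 * E (P \<alpha>) i j) (E (P \<beta>))"
      by (rule ipr_cong_left) (metis sumId)
    also have "\<dots> = (\<Sum>\<alpha><N. 1 * ipr n (E (P \<alpha>)) (E (P \<beta>)))"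
      by (rule ipr_sum_left) simp
    also have "\<dots> = (\<Sum>\<alpha><N. 1 * (if \<alpha> = \<beta> then a else b))"
      using G that by simp
    also have "\<dots> = b * real N + (a - b)"
      using sum_if_eq[OF that, of "\<lambda>_. 1" a b] by simp
    also have "\<dots> = a + (real N - 1) * b" by (simp add: algebra_simps)
    also have "\<dots> = 1 / real n" unfolding b_eq using nr by (simp add: field_simps)
    finally show ?thesis by (simp add: ipr_sym)
  qed
  have Id_s: "ipr n Id (E \<sigma>) = 1"
  proof -
    have "ipr n Id (E \<sigma>) = (\<Sum>i<n. Re (cnj (\<sigma> $$ (i, i))))"
      unfolding ipr_def Id_def E_def by (simp add: if01_mult if_distrib[of Re] cong: if_cong)
    also have "\<dots> = Re (mtrace \<sigma>)" unfolding mtrace_def dims by (simp add: Re_sum)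
    finally show ?thesis using trs by simp
  qed
  have Id_Id: "ipr n Id Id = real n"
    unfolding ipr_def Id_def by (simp add: if01_mult if_distrib[of Re] cong: if_cong)
  define x where "x = (\<lambda>\<alpha>. ipr n (E (P \<alpha>)) (E \<sigma>))"
  have x_eq: "Re (mtrace (P \<alpha> * \<sigma>)) = x \<alpha>" if "\<alpha> < N" for \<alpha>
    unfolding x_def E_def using herm_mtrace[OF hP[OF that] hs] by simp
  have sumx: "(\<Sum>\<alpha><N. x \<alpha>) = 1"
  proof -
    have "(\<Sum>\<alpha><N. x \<alpha>) = (\<Sum>\<alpha><N. 1 * ipr n (E (P \<alpha>)) (E \<sigma>))" unfolding x_def by simp
    also have "\<dots> = ipr n (\<lambda>i j. \<Sum>\<alpha><N. complex_of_real 1 * E (P \<alpha>) i j) (E \<sigma>)"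
      by (rule ipr_sum_left[symmetric]) simp
    also have "\<dots> = ipr n Id (E \<sigma>)"
      by (rule ipr_cong_left) (metis sumId)
    finally show ?thesis using Id_s by simp
  qed
  define w where "w = (\<lambda>\<alpha>. x \<alpha> - 1 / real n ^ 2)"
  define S where "S = (\<Sum>\<alpha><N. (w \<alpha>)^2)"
  have sumw: "(\<Sum>\<alpha><N. w \<alpha>) = 0"
    unfolding w_def sum_subtractf sumx using nr by (simp add: realN)
  define Z where "Z = (\<lambda>i j. \<Sum>\<alpha><N. complex_of_real (w \<alpha>) * E (P \<alpha>) i j)"
  have ZP: "ipr n Z (E (P \<beta>)) = c * w \<beta>" if "\<beta> < N" for \<beta>
  proof -
    have "ipr n Z (E (P \<beta>)) = (\<Sum>\<alpha><N. w \<alpha> * ipr n (E (P \<alpha>)) (E (P \<beta>)))"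
      unfolding Z_def by (rule ipr_sum_left) simp
    also have "\<dots> = (\<Sum>\<alpha><N. w \<alpha> * (if \<alpha> = \<beta> then a else b))"
      using G that by simp
    also have "\<dots> = c * w \<beta>" using sum_if_eq[OF that, of w a b] sumw unfolding c_def by simp
    finally show ?thesis .
  qed
  have ZZ: "ipr n Z Z = c * S"
  proof -
    have "ipr n Z Z = (\<Sum>\<beta><N. w \<beta> * ipr n Z (E (P \<beta>)))"
      unfolding Z_def by (rule ipr_sum_right) simp
    also have "\<dots> = (\<Sum>\<beta><N. c * (w \<beta>)^2)"
      using ZP by (simp add: power2_eq_square mult.left_commute)
    finally show ?thesis unfolding S_def by (simp add: sum_distrib_left)
  qed
  have Zs: "ipr n Z (E \<sigma>) = S"
  proof -
    have "ipr n Z (E \<sigma>) = (\<Sum>\<alpha><N. w \<alpha> * x \<alpha>)"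
      unfolding Z_def x_def by (rule ipr_sum_left) simp
    also have "\<dots> = (\<Sum>\<alpha><N. (w \<alpha>)^2 + (1 / real n ^ 2) * w \<alpha>)"
      by (intro sum.cong refl) (simp add: w_def power2_eq_square algebra_simps)
    also have "\<dots> = S" unfolding S_def sum.distrib sum_distrib_left[symmetric] sumw by simp
    finally show ?thesis .
  qed
  have ZI: "ipr n Z Id = 0"
  proof -
    have "ipr n Z Id = (\<Sum>\<alpha><N. w \<alpha> * ipr n (E (P \<alpha>)) Id)"
      unfolding Z_def by (rule ipr_sum_left) simp
    also have "\<dots> = (\<Sum>\<alpha><N. w \<alpha> * (1 / real n))"
      using trP by simp
    also have "\<dots> = 0" unfolding sum_distrib_right[symmetric] sumw by simp
    finally show ?thesis .
  qed
  define q where "q = ipr n (E \<sigma>) (E \<sigma>)"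
  have q1: "q \<le> 1" unfolding q_def E_def by (rule density_purity[OF dm])
  define Y where "Y = (\<lambda>i j. Z i j + complex_of_real (- c) * E \<sigma> i j + complex_of_real (c / real n) * Id i j)"
  have "ipr n Y Y = ipr n Z Y + (- c) * ipr n (E \<sigma>) Y + (c / real n) * ipr n Id Y"
    unfolding Y_def by (rule ipr_lin3)
  also have "ipr n Z Y = 0"
    unfolding Y_def ipr_lin3_right ZZ Zs ZI by simp
  also have "ipr n Id Y = 0"
    unfolding Y_def ipr_lin3_right Id_s Id_Id using ZI nr by (simp add: ipr_sym)
  also have "ipr n (E \<sigma>) Y = S - c * q + c / real n"
    unfolding Y_def ipr_lin3_right q_def[symmetric] using Zs Id_s by (simp add: ipr_sym)
  finally have YY: "ipr n Y Y = - c * (S - c * q + c / real n)" by simp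
  have c_eq: "c = (a * real n ^ 3 - 1) / (real n * (real n ^ 2 - 1))"
  proof -
    define D where "D = real n * (real n ^ 2 - 1)"
    have D0: "D \<noteq> 0" using den unfolding D_def by linarith
    have "c = (a * D - (1 - real n * a)) / D" unfolding c_def b_def D_def[symmetric] using D0 by (simp add: field_simps)
    also have "a * D - (1 - real n * a) = a * real n ^ 3 - 1"
      unfolding D_def by (simp add: algebra_simps power3_eq_cube power2_eq_square)
    finally show ?thesis unfolding D_def .
  qed
  have cpos: "c > 0"
  proof -
    have "a * real n ^ 3 > 1" using alow nr by (simp add: field_simps)
    moreover note den
    ultimately show ?thesis unfolding c_eq by simp
  qed
  have "0 \<le> - c * (S - c * q + c / real n)" using ipr_nonneg[of n Y] YY by simp
  then have "S \<le> c * q - c / real n" using cpos by (simp add: mult_le_0_iff)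
  also have "\<dots> \<le> c * (1 - 1 / real n)" using q1 cpos by (simp add: algebra_simps)
  finally have Sb: "S \<le> c * (1 - 1 / real n)" .
  have "(\<Sum>\<alpha><n^2. (Re (mtrace (P \<alpha> * \<sigma>)))^2) = (\<Sum>\<alpha><N. (w \<alpha> + 1 / real n ^ 2)^2)"
    unfolding N_def[symmetric] by (intro sum.cong refl) (simp add: x_eq w_def)
  also have "\<dots> = (\<Sum>\<alpha><N. (w \<alpha>)^2 + (2 / real n ^ 2) * w \<alpha> + (1 / real n ^ 2)^2)"
    by (intro sum.cong refl) (simp add: power2_sum)
  also have "\<dots> = S + 1 / real n ^ 2"
    unfolding sum.distrib sum_distrib_left[symmetric] sumw S_def using nr by (simp add: realN field_simps)
  also have "\<dots> \<le> c * (1 - 1 / real n) + 1 / real n ^ 2" using Sb by simp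
  also have "\<dots> = (a * real n ^ 2 + 1) / (real n * (real n + 1))"
    unfolding c_eq by (rule alg[OF nr])
  finally show ?thesis .
qed



lemma sum_pq:
  fixes f :: "nat \<Rightarrow> 'a::comm_monoid_add"
  shows "(\<Sum>r<p*q. f r) = (\<Sum>i<p. \<Sum>l<q. f (i*q + l))"
proof -
  have "(\<Sum>r<p*q. f r) = (\<Sum>i<p. sum f {i*q..<i*q+q})"
    by (rule sum.nat_group[symmetric])
  also have "\<dots> = (\<Sum>i<p. \<Sum>l<q. f (i*q + l))"
  proof (rule sum.cong[OF refl])
    fix i
    show "sum f {i*q..<i*q+q} = (\<Sum>l<q. f (i*q + l))"
    proof -
      have "sum f {0 + i*q..<q + i*q} = (\<Sum>l\<in>{0..<q}. f (l + i*q))"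
        by (rule sum.shift_bounds_nat_ivl)
      then show ?thesis by (simp add: atLeast0LessThan add.commute)
    qed
  qed
  finally show ?thesis .
qed

lemma kron_carrier:
  assumes "A \<in> carrier_mat p p" "B \<in> carrier_mat q q"
  shows "kron A B \<in> carrier_mat (p*q) (p*q)"
  using assms unfolding kron_def by auto

lemma tensor_carrier:
  assumes "\<forall>i<k. A i \<in> carrier_mat (d i) (d i)"
  shows "tensor_prod k A \<in> carrier_mat (\<Prod>i<k. d i) (\<Prod>i<k. d i)"
  using assms
proof (induction k)
  case 0 then show ?case by simp
next
  case (Suc k)
  then show ?case by (simp add: kron_carrier)
qed

lemma kron_trace:
  assumes A: "A \<in> carrier_mat p p" "C \<in> carrier_mat p p" and B: "B \<in> carrier_mat q q" "D \<in> carrier_mat q q"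
    and q: "q > 0"
  shows "mtrace (kron A B * kron C D) = mtrace (A * C) * mtrace (B * D)"
proof -
  have kA: "kron A B $$ (r, c) = A $$ (r div q, c div q) * B $$ (r mod q, c mod q)" if "r < p*q" "c < p*q" for r c
    using A B that unfolding kron_def by simp
  have kC: "kron C D $$ (r, c) = C $$ (r div q, c div q) * D $$ (r mod q, c mod q)" if "r < p*q" "c < p*q" for r c
    using A B that unfolding kron_def by simp
  have lt: "i * q + k < p * q" if "i < p" "k < q" for i k
  proof -
    have "i * q + k < i * q + q" using that by simp
    also have "\<dots> = Suc i * q" by simp
    also have "\<dots> \<le> p * q" using that by (intro mult_right_mono) auto
    finally show ?thesis .
  qed
  have "mtrace (kron A B * kron C D) = (\<Sum>r<p*q. \<Sum>c<p*q. kron A B $$ (r, c) * kron C D $$ (c, r))"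
    by (rule mtrace_mult[OF kron_carrier[OF A(1) B(1)] kron_carrier[OF A(2) B(2)]])
  also have "\<dots> = (\<Sum>i<p. \<Sum>k<q. \<Sum>j<p. \<Sum>l<q. (A $$ (i, j) * C $$ (j, i)) * (B $$ (k, l) * D $$ (l, k)))"
    unfolding sum_pq
  proof (intro sum.cong refl)
    fix i k j l assume "i \<in> {..<p}" "k \<in> {..<q}" "j \<in> {..<p}" "l \<in> {..<q}"
    then show "kron A B $$ (i * q + k, j * q + l) * kron C D $$ (j * q + l, i * q + k) =
         A $$ (i, j) * C $$ (j, i) * (B $$ (k, l) * D $$ (l, k))"
      using q lt by (simp add: kA kC)
  qed
  also have "\<dots> = (\<Sum>i<p. \<Sum>j<p. \<Sum>k<q. \<Sum>l<q. (A $$ (i, j) * C $$ (j, i)) * (B $$ (k, l) * D $$ (l, k)))"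
  proof (rule sum.cong[OF refl])
    fix i
    show "(\<Sum>k<q. \<Sum>j<p. \<Sum>l<q. (A $$ (i, j) * C $$ (j, i)) * (B $$ (k, l) * D $$ (l, k)))
       = (\<Sum>j<p. \<Sum>k<q. \<Sum>l<q. (A $$ (i, j) * C $$ (j, i)) * (B $$ (k, l) * D $$ (l, k)))"
      by (rule sum.swap)
  qed
  also have "\<dots> = (\<Sum>i<p. \<Sum>j<p. (A $$ (i, j) * C $$ (j, i)) * (\<Sum>k<q. \<Sum>l<q. B $$ (k, l) * D $$ (l, k)))"
    by (simp add: sum_distrib_left)
  also have "\<dots> = (\<Sum>i<p. \<Sum>j<p. A $$ (i, j) * C $$ (j, i)) * (\<Sum>k<q. \<Sum>l<q. B $$ (k, l) * D $$ (l, k))"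
    by (simp add: sum_distrib_right)
  also have "\<dots> = mtrace (A * C) * mtrace (B * D)"
    using mtrace_mult[OF A] mtrace_mult[OF B] by simp
  finally show ?thesis .
qed

lemma tensor_trace:
  assumes "\<forall>i<k. A i \<in> carrier_mat (d i) (d i) \<and> B i \<in> carrier_mat (d i) (d i) \<and> d i > 0"
  shows "mtrace (tensor_prod k A * tensor_prod k B) = (\<Prod>i<k. mtrace (A i * B i))"
  using assms
proof (induction k)
  case 0 then show ?case by (simp add: mtrace_def)
next
  case (Suc k)
  have cA: "tensor_prod k A \<in> carrier_mat (\<Prod>i<k. d i) (\<Prod>i<k. d i)"
    and cB: "tensor_prod k B \<in> carrier_mat (\<Prod>i<k. d i) (\<Prod>i<k. d i)"
    using Suc.prems by (auto intro!: tensor_carrier)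
  have "mtrace (tensor_prod (Suc k) A * tensor_prod (Suc k) B)
      = mtrace (tensor_prod k A * tensor_prod k B) * mtrace (A k * B k)"
  proof -
    have "A k \<in> carrier_mat (d k) (d k)" "B k \<in> carrier_mat (d k) (d k)" "d k > 0"
      using Suc.prems by auto
    then show ?thesis by (simp add: kron_trace[OF cA cB])
  qed
  also have "\<dots> = (\<Prod>i<Suc k. mtrace (A i * B i))"
    using Suc by simp
  finally show ?case .
qed

lemma prod_le_two:
  fixes z :: "nat \<Rightarrow> real"
  assumes "i < m" "l < m" "i \<noteq> l" "\<forall>k<m. \<bar>z k\<bar> \<le> 1"
  shows "(\<Prod>k<m. \<bar>z k\<bar>) \<le> \<bar>z i\<bar> * \<bar>z l\<bar>"
proof -
  have 1: "(\<Prod>k<m. \<bar>z k\<bar>) = \<bar>z i\<bar> * (\<Prod>k\<in>{..<m}-{i}. \<bar>z k\<bar>)"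
    by (rule prod.remove) (use assms in auto)
  have 2: "(\<Prod>k\<in>{..<m}-{i}. \<bar>z k\<bar>) = \<bar>z l\<bar> * (\<Prod>k\<in>{..<m}-{i}-{l}. \<bar>z k\<bar>)"
    by (rule prod.remove) (use assms in auto)
  have 3: "(\<Prod>k\<in>{..<m}-{i}-{l}. \<bar>z k\<bar>) \<le> 1"
    by (rule prod_le_1) (use assms in auto)
  have "\<bar>z l\<bar> * (\<Prod>k\<in>{..<m}-{i}-{l}. \<bar>z k\<bar>) \<le> \<bar>z l\<bar>"
    using mult_left_mono[OF 3, of "\<bar>z l\<bar>"] by simp
  then have "\<bar>z i\<bar> * (\<bar>z l\<bar> * (\<Prod>k\<in>{..<m}-{i}-{l}. \<bar>z k\<bar>)) \<le> \<bar>z i\<bar> * \<bar>z l\<bar>"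
    by (rule mult_left_mono) simp
  then show ?thesis unfolding 1 2 .
qed

lemma rot_bij:
  assumes "m > 0"
  shows "bij_betw (\<lambda>i. Suc i mod m) {..<m} {..<m}"
proof -
  have inj: "inj_on (\<lambda>i. Suc i mod m) {..<m}"
    by (auto simp: inj_on_def mod_Suc split: if_splits)
  have sub: "(\<lambda>i. Suc i mod m) ` {..<m} \<subseteq> {..<m}" using assms by auto
  show ?thesis unfolding bij_betw_def using inj endo_inj_surj[OF _ sub inj] by simp
qed

lemma prod_avg:
  fixes z :: "nat \<Rightarrow> real"
  assumes m2: "m \<ge> 2" and z1: "\<forall>k<m. \<bar>z k\<bar> \<le> 1"
  shows "(\<Prod>k<m. z k) \<le> (1 / real m) * (\<Sum>k<m. (z k)^2)"
proof -
  define s where "s = (\<lambda>i. Suc i mod m)"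
  have each: "(\<Prod>k<m. \<bar>z k\<bar>) \<le> ((z i)^2 + (z (s i))^2) / 2" if "i < m" for i
  proof -
    have sl: "s i < m" using m2 unfolding s_def by simp
    have ne: "i \<noteq> s i" using m2 that unfolding s_def by (auto simp: mod_Suc)
    have "(\<Prod>k<m. \<bar>z k\<bar>) \<le> \<bar>z i\<bar> * \<bar>z (s i)\<bar>" by (rule prod_le_two[OF that sl ne z1])
    also have "\<dots> \<le> ((z i)^2 + (z (s i))^2) / 2"
      using sum_squares_bound[of "\<bar>z i\<bar>" "\<bar>z (s i)\<bar>"] by simp
    finally show ?thesis .
  qed
  have "real m * (\<Prod>k<m. \<bar>z k\<bar>) = (\<Sum>i<m. (\<Prod>k<m. \<bar>z k\<bar>))" by simp
  also have "\<dots> \<le> (\<Sum>i<m. ((z i)^2 + (z (s i))^2) / 2)" by (rule sum_mono) (use each in auto)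
  also have "\<dots> = ((\<Sum>i<m. (z i)^2) + (\<Sum>i<m. (z (s i))^2)) / 2"
    by (simp only: sum_divide_distrib[symmetric] sum.distrib)
  also have "(\<Sum>i<m. (z (s i))^2) = (\<Sum>i<m. (z i)^2)"
    unfolding s_def by (rule sum.reindex_bij_betw[OF rot_bij]) (use m2 in auto)
  finally have "real m * (\<Prod>k<m. \<bar>z k\<bar>) \<le> (\<Sum>i<m. (z i)^2)" by simp
  then have "(\<Prod>k<m. \<bar>z k\<bar>) \<le> (1 / real m) * (\<Sum>k<m. (z k)^2)"
    using m2 by (simp add: field_simps)
  moreover have "(\<Prod>k<m. z k) \<le> (\<Prod>k<m. \<bar>z k\<bar>)"
    using abs_prod[of z "{..<m}"] abs_ge_self[of "\<Prod>k<m. z k"] by simp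
  ultimately show ?thesis by linarith
qed

lemma sum_inj_bound:
  fixes f :: "nat \<Rightarrow> real"
  assumes "inj_on \<tau> {..<dd}" "\<tau> ` {..<dd} \<subseteq> {..<N}" "\<And>\<alpha>. 0 \<le> f \<alpha>"
  shows "(\<Sum>j<dd. f (\<tau> j)) \<le> (\<Sum>\<alpha><N. f \<alpha>)"
proof -
  have "(\<Sum>j<dd. f (\<tau> j)) = sum f (\<tau> ` {..<dd})" using sum.reindex[OF assms(1), of f] by simp
  also have "\<dots> \<le> (\<Sum>\<alpha><N. f \<alpha>)" by (rule sum_mono2) (use assms in auto)
  finally show ?thesis .
qed

lemma comb_bound:
  fixes y :: "nat \<Rightarrow> nat \<Rightarrow> real" and Bd :: "nat \<Rightarrow> real"
  assumes m2: "m \<ge> 2" and sq: "\<forall>i<m. (\<Sum>\<alpha><N i. (y i \<alpha>)^2) \<le> Bd i" and B1: "\<forall>i<m. Bd i \<le> 1"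
    and tau: "\<forall>i<m. inj_on (\<tau> i) {..<dd} \<and> \<tau> i ` {..<dd} \<subseteq> {..<N i}"
  shows "(\<Sum>j<dd. \<Prod>i<m. y i (\<tau> i j)) \<le> (1 / real m) * (\<Sum>i<m. Bd i)"
proof -
  have abs1: "\<bar>y i (\<tau> i j)\<bar> \<le> 1" if "i < m" "j < dd" for i j
  proof -
    have mem: "\<tau> i j \<in> {..<N i}" using tau that by blast
    have "(y i (\<tau> i j))^2 \<le> (\<Sum>\<alpha><N i. (y i \<alpha>)^2)" by (rule member_le_sum[OF mem]) auto
    also have "\<dots> \<le> 1" using sq B1 that by fastforce
    finally show ?thesis by (simp add: abs_square_le_1)
  qed
  have "(\<Sum>j<dd. \<Prod>i<m. y i (\<tau> i j)) \<le> (\<Sum>j<dd. (1 / real m) * (\<Sum>i<m. (y i (\<tau> i j))^2))"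
    by (rule sum_mono, rule prod_avg[OF m2]) (use abs1 in auto)
  also have "\<dots> = (1 / real m) * (\<Sum>i<m. \<Sum>j<dd. (y i (\<tau> i j))^2)"
    by (simp add: sum_distrib_left sum.swap[of _ "{..<dd}"])
  also have "\<dots> \<le> (1 / real m) * (\<Sum>i<m. Bd i)"
  proof (rule mult_left_mono)
    show "(\<Sum>i<m. \<Sum>j<dd. (y i (\<tau> i j))^2) \<le> (\<Sum>i<m. Bd i)"
    proof (rule sum_mono)
      fix i assume i: "i \<in> {..<m}"
      have "(\<Sum>j<dd. (y i (\<tau> i j))^2) \<le> (\<Sum>\<alpha><N i. (y i \<alpha>)^2)"
        by (rule sum_inj_bound[where f = "\<lambda>\<alpha>. (y i \<alpha>)^2"]) (use tau i in auto)
      also have "\<dots> \<le> Bd i" using sq i by auto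
      finally show "(\<Sum>j<dd. (y i (\<tau> i j))^2) \<le> Bd i" .
    qed
  qed simp
  finally show ?thesis .
qed

lemma tensor_cong:
  assumes "\<forall>i<k. A i = B i"
  shows "tensor_prod k A = tensor_prod k B"
  using assms by (induction k) auto

lemma trace_mix:
  assumes Q: "Q \<in> carrier_mat D D" and T: "\<forall>k<K. T k \<in> carrier_mat D D"
  shows "mtrace (Q * mat D D (\<lambda>(r, c). \<Sum>k<K. complex_of_real (p k) * T k $$ (r, c)))
       = (\<Sum>k<K. complex_of_real (p k) * mtrace (Q * T k))"
proof -
  have "mtrace (Q * mat D D (\<lambda>(r, c). \<Sum>k<K. complex_of_real (p k) * T k $$ (r, c)))
      = (\<Sum>r<D. \<Sum>c<D. Q $$ (r, c) * (\<Sum>k<K. complex_of_real (p k) * T k $$ (c, r)))"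
    by (subst mtrace_mult[OF Q]) (auto intro!: sum.cong)
  also have "\<dots> = (\<Sum>r<D. \<Sum>c<D. \<Sum>k<K. complex_of_real (p k) * (Q $$ (r, c) * T k $$ (c, r)))"
    by (simp add: sum_distrib_left mult.left_commute)
  also have "\<dots> = (\<Sum>r<D. \<Sum>k<K. \<Sum>c<D. complex_of_real (p k) * (Q $$ (r, c) * T k $$ (c, r)))"
    by (rule sum.cong[OF refl], rule sum.swap)
  also have "\<dots> = (\<Sum>k<K. \<Sum>r<D. \<Sum>c<D. complex_of_real (p k) * (Q $$ (r, c) * T k $$ (c, r)))"
    by (rule sum.swap)
  also have "\<dots> = (\<Sum>k<K. complex_of_real (p k) * mtrace (Q * T k))"
    by (rule sum.cong[OF refl]) (use T Q in \<open>simp add: mtrace_mult sum_distrib_left\<close>)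
  finally show ?thesis .
qed

lemma herm_real_trace:
  assumes "hermitian_mat n A" "hermitian_mat n B"
  shows "mtrace (A * B) = complex_of_real (Re (mtrace (A * B)))"
  using herm_mtrace[OF assms] by simp

lemma Bd_le1:
  fixes a :: real and n :: nat
  assumes "n \<ge> 2" "a \<le> 1 / real n ^ 2"
  shows "(a * real n ^ 2 + 1) / (real n * (real n + 1)) \<le> 1"
proof -
  have nr: "real n \<ge> 2" using assms by simp
  have "a * real n ^ 2 \<le> 1" using assms(2) nr by (simp add: field_simps)
  moreover have "real n * (real n + 1) \<ge> 2 * 3" using nr by (intro mult_mono) auto
  ultimately show ?thesis by simp
qed

theorem theorem3:
  fixes m :: nat and d :: "nat \<Rightarrow> nat" and a :: "nat \<Rightarrow> real"
    and P :: "nat \<Rightarrow> nat \<Rightarrow> complex mat" and \<rho> :: "complex mat"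
  assumes "m \<ge> 2"
    and "\<forall>i<m. d i \<ge> 2"
    and "density_matrix (\<Prod>i<m. d i) \<rho>"
    and "\<forall>i<m. general_sic_povm (d i) (a i) (P i)"
    and "fully_separable m d \<rho>"
  shows "J_value m d P \<rho> \<le>
           (1 / real m) * (\<Sum>i<m. (a i * real (d i) ^ 2 + 1) / (real (d i) * (real (d i) + 1)))"
proof -
  note m2 = assms(1) and d2 = assms(2) and sic = assms(4)
  define D where "D = (\<Prod>i<m. d i)"
  define dd where "dd = Min ((\<lambda>i. d i ^ 2) ` {..<m})"
  define Bd where "Bd = (\<lambda>i. (a i * real (d i) ^ 2 + 1) / (real (d i) * (real (d i) + 1)))"
  define C where "C = (1 / real m) * (\<Sum>i<m. Bd i)"
  obtain K :: nat and p \<sigma>s where pk: "\<forall>k<K. 0 \<le> p k" and p1: "(\<Sum>k<K. p k) = 1"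
    and dmk: "\<forall>k<K. \<forall>i<m. density_matrix (d i) (\<sigma>s k i)"
    and rho: "\<rho> = mat D D (\<lambda>(r, c). \<Sum>k<K. complex_of_real (p k) * tensor_prod m (\<sigma>s k) $$ (r, c))"
    using assms(5) unfolding fully_separable_def Let_def D_def[symmetric] by blast
  define V where "V = (\<lambda>\<tau>::nat \<Rightarrow> nat \<Rightarrow> nat. Re (\<Sum>j<dd. mtrace (tensor_prod m (\<lambda>i. P i (\<tau> i j)) * \<rho>)))"
  define cond where "cond = (\<lambda>\<tau>::nat \<Rightarrow> nat \<Rightarrow> nat. \<forall>i<m. inj_on (\<tau> i) {..<dd} \<and> \<tau> i ` {..<dd} \<subseteq> {..<d i ^ 2})"
  have J: "J_value m d P \<rho> = Max {V \<tau> | \<tau>. cond \<tau>}"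
    unfolding J_value_def Let_def V_def cond_def dd_def by simp
  have hP: "hermitian_mat (d i) (P i \<alpha>)" if "i < m" "\<alpha> < d i ^ 2" for i \<alpha>
    using sic that unfolding general_sic_povm_def psd_mat_def by blast
  have hs: "hermitian_mat (d i) (\<sigma>s k i)" if "k < K" "i < m" for k i
    using dmk that unfolding density_matrix_def psd_mat_def by blast
  have carr: "A \<in> carrier_mat n n" if "hermitian_mat n A" for n A
    using that unfolding hermitian_mat_def by blast
  define x where "x = (\<lambda>k i \<alpha>. Re (mtrace (P i \<alpha> * \<sigma>s k i)))"
  have Bd1: "Bd i \<le> 1" if "i < m" for i
    unfolding Bd_def by (rule Bd_le1) (use d2 sic that in \<open>auto simp: general_sic_povm_def\<close>)
  have sqb: "(\<Sum>\<alpha><d i ^ 2. (x k i \<alpha>)^2) \<le> Bd i" if "k < K" "i < m" for k i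
    unfolding x_def Bd_def by (rule sic_bound) (use sic d2 dmk that in auto)
  have dd_le: "dd \<le> d i ^ 2" if "i < m" for i
    unfolding dd_def by (rule Min_le) (use that in auto)
  have bound: "V \<tau> \<le> C" if c: "cond \<tau>" for \<tau>
  proof -
    have tau: "\<forall>i<m. inj_on (\<tau> i) {..<dd} \<and> \<tau> i ` {..<dd} \<subseteq> {..<d i ^ 2}" using c unfolding cond_def .
    have tlt: "\<tau> i j < d i ^ 2" if "i < m" "j < dd" for i j using tau that by blast
    have Qc: "tensor_prod m (\<lambda>i. P i (\<tau> i j)) \<in> carrier_mat D D" if "j < dd" for j
      unfolding D_def by (rule tensor_carrier) (use that tlt hP carr in blast)
    have Tc: "\<forall>k<K. tensor_prod m (\<sigma>s k) \<in> carrier_mat D D"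
      unfolding D_def using hs carr by (blast intro: tensor_carrier)
    have tr: "mtrace (tensor_prod m (\<lambda>i. P i (\<tau> i j)) * tensor_prod m (\<sigma>s k))
        = complex_of_real (\<Prod>i<m. x k i (\<tau> i j))" if "j < dd" "k < K" for j k
    proof -
      have "mtrace (tensor_prod m (\<lambda>i. P i (\<tau> i j)) * tensor_prod m (\<sigma>s k))
          = (\<Prod>i<m. mtrace (P i (\<tau> i j) * \<sigma>s k i))"
        by (rule tensor_trace[where d = d]) (use that tlt hP hs carr d2 in fastforce)
      also have "\<dots> = (\<Prod>i<m. complex_of_real (x k i (\<tau> i j)))"
        unfolding x_def using that tlt hP hs by (intro prod.cong refl herm_real_trace) auto
      finally show ?thesis by simp
    qed
    have "V \<tau> = Re (\<Sum>j<dd. \<Sum>k<K. complex_of_real (p k) * complex_of_real (\<Prod>i<m. x k i (\<tau> i j)))"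
      unfolding V_def rho using Qc Tc tr by (simp add: trace_mix)
    also have "\<dots> = (\<Sum>j<dd. \<Sum>k<K. p k * (\<Prod>i<m. x k i (\<tau> i j)))"
      by (simp add: Re_sum del: of_real_prod)
    also have "\<dots> = (\<Sum>k<K. p k * (\<Sum>j<dd. \<Prod>i<m. x k i (\<tau> i j)))"
      by (simp add: sum.swap[of _ "{..<dd}"] sum_distrib_left)
    also have "\<dots> \<le> (\<Sum>k<K. p k * C)"
    proof (rule sum_mono)
      fix k assume k: "k \<in> {..<K}"
      have "(\<Sum>j<dd. \<Prod>i<m. x k i (\<tau> i j)) \<le> C"
        unfolding C_def by (rule comb_bound[OF m2 _ _ tau]) (use sqb Bd1 k in auto)
      then show "p k * (\<Sum>j<dd. \<Prod>i<m. x k i (\<tau> i j)) \<le> p k * C"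
        using pk k by (intro mult_left_mono) auto
    qed
    also have "\<dots> = C" using p1 by (simp add: sum_distrib_right[symmetric])
    finally show ?thesis .
  qed
  define R where "R = (\<lambda>\<tau>::nat \<Rightarrow> nat \<Rightarrow> nat. restrict (\<lambda>i. restrict (\<tau> i) {..<dd}) {..<m})"
  have VR: "V (R \<tau>) = V \<tau>" for \<tau>
    unfolding V_def
  proof (intro arg_cong[where f = Re] sum.cong refl)
    fix j assume j: "j \<in> {..<dd}"
    have "tensor_prod m (\<lambda>i. P i (R \<tau> i j)) = tensor_prod m (\<lambda>i. P i (\<tau> i j))"
      by (rule tensor_cong) (use j in \<open>simp add: R_def\<close>)
    then show "mtrace (tensor_prod m (\<lambda>i. P i (R \<tau> i j)) * \<rho>) = mtrace (tensor_prod m (\<lambda>i. P i (\<tau> i j)) * \<rho>)"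
      by simp
  qed
  have sub: "{V \<tau> | \<tau>. cond \<tau>} \<subseteq> V ` (PiE {..<m} (\<lambda>i. PiE {..<dd} (\<lambda>_. {..<d i ^ 2})))"
  proof
    fix v assume "v \<in> {V \<tau> | \<tau>. cond \<tau>}"
    then obtain \<tau> where v: "v = V \<tau>" and c: "cond \<tau>" by blast
    have "R \<tau> \<in> PiE {..<m} (\<lambda>i. PiE {..<dd} (\<lambda>_. {..<d i ^ 2}))"
    proof -
      have lt: "\<forall>i<m. \<forall>j<dd. \<tau> i j < d i ^ 2" using c unfolding cond_def by blast
      show ?thesis unfolding R_def restrict_PiE_iff using lt by simp
    qed
    then show "v \<in> V ` (PiE {..<m} (\<lambda>i. PiE {..<dd} (\<lambda>_. {..<d i ^ 2})))"
      by (rule image_eqI[rotated]) (use v VR[of \<tau>] in simp)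
  qed
  have fin: "finite {V \<tau> | \<tau>. cond \<tau>}"
    by (rule finite_subset[OF sub], intro finite_imageI finite_PiE) auto
  have "cond (\<lambda>i j. j)" unfolding cond_def using dd_le by (auto intro: less_le_trans)
  then have ne: "{V \<tau> | \<tau>. cond \<tau>} \<noteq> {}" by blast
  have "J_value m d P \<rho> \<le> C"
    unfolding J by (rule Max.boundedI[OF fin ne]) (use bound in blast)
  then show ?thesis unfolding C_def Bd_def .
qed

end
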